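(* Let $I\in\mathbb{I}_{2,n}$. Then the ss-compressed category $\mathcal{C}^{ss}_I$ is isomorphic to the path category (with no relations) of a quiver of one of the following five forms: a single vertex; $\bullet\to\bullet$; $\bullet\to\bullet\leftarrow\bullet$; $\bullet\leftarrow\bullet\to\bullet$; $\bullet\to\bullet\leftarrow\bullet\to\bullet$. In particular $\mathcal{C}^{ss}_I$ is of finite representation type (Dynkin type $A_k$ with $k\le 4$).
   Context: Fix a field $K$. $G_{2,n}$ is the equioriented commutative $2\times n$ grid: the quiver with vertex set $\{(i,j):1\le i\le 2,\ 1\le j\le n\}$ and arrows $(i,j)\to(i,j+1)$ and $(1,j)\to(2,j)$, bound by all commutativity relations. An interval of $G_{2,n}$ is a nonempty full subquiver $I$ which is connected (as an undirected graph) and convex (whenever $x,y\in I_0$ and there are paths $x\to z$, $z\to y$ in $G_{2,n}$, then $z\in I_0$); $\mathbb{I}_{2,n}$ is the set of intervals. $I^{ss}_0$ is the set of vertices of $I$ that are sources or sinks of the quiver $I$. $KG_{2,n}$ is the $K$-linear category whose objects are vertices and morphisms are $K$-linear combinations of paths modulo commutativity relations; $\mathcal{C}^{ss}_I$ is its full subcategory on $I^{ss}_0$. *)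

theory Defs
  imports Main
begin

text \<open>A quiver is given by a vertex set V and an arrow relation arr (all quivers
  occurring here have at most one arrow between two vertices, so a path is
  determined by its vertex sequence; a trivial path at x is the list [x]).\<close>

definition is_path :: "'v set \<Rightarrow> ('v \<Rightarrow> 'v \<Rightarrow> bool) \<Rightarrow> 'v \<Rightarrow> 'v \<Rightarrow> 'v list \<Rightarrow> bool" where
  "is_path V arr x y p \<longleftrightarrow> p \<noteq> [] \<and> hd p = x \<and> last p = y \<and> set p \<subseteq> V \<and>
     (\<forall>i. Suc i < length p \<longrightarrow> arr (p ! i) (p ! Suc i))"

definition paths :: "'v set \<Rightarrow> ('v \<Rightarrow> 'v \<Rightarrow> bool) \<Rightarrow> 'v \<Rightarrow> 'v \<Rightarrow> 'v list set" where
  "paths V arr x y = {p. is_path V arr x y p}"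

text \<open>K-linear combinations of paths from x to y (the free hom space of the path category).\<close>
definition lin_paths :: "'v set \<Rightarrow> ('v \<Rightarrow> 'v \<Rightarrow> bool) \<Rightarrow> 'v \<Rightarrow> 'v \<Rightarrow> ('v list \<Rightarrow> 'k::field) set" where
  "lin_paths V arr x y = {c. \<forall>p. c p \<noteq> 0 \<longrightarrow> p \<in> paths V arr x y}"

definition delta :: "'v list \<Rightarrow> ('v list \<Rightarrow> 'k::field)" where
  "delta p = (\<lambda>r. if r = p then 1 else 0)"

text \<open>Bilinear extension of path concatenation: d \<circ> c for c : x \<rightarrow> y, d : y \<rightarrow> z.\<close>
definition pcomp :: "'v set \<Rightarrow> ('v \<Rightarrow> 'v \<Rightarrow> bool) \<Rightarrow> 'v \<Rightarrow> 'v \<Rightarrow> 'v \<Rightarrow>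
    ('v list \<Rightarrow> 'k::field) \<Rightarrow> ('v list \<Rightarrow> 'k) \<Rightarrow> ('v list \<Rightarrow> 'k)" where
  "pcomp V arr x y z d c = (\<lambda>r. \<Sum>p\<in>paths V arr x y. \<Sum>q\<in>paths V arr y z.
       if p @ tl q = r then c p * d q else 0)"

text \<open>This is the
  (x,y)-component of the ideal of all commutativity relations.\<close>
inductive_set comm_rel :: "'v set \<Rightarrow> ('v \<Rightarrow> 'v \<Rightarrow> bool) \<Rightarrow> 'v \<Rightarrow> 'v \<Rightarrow> ('v list \<Rightarrow> 'k::field) set"
  for V arr x y where
  zero: "(\<lambda>r. 0) \<in> comm_rel V arr x y"
| diff: "p \<in> paths V arr x y \<Longrightarrow> q \<in> paths V arr x y \<Longrightarrow>
         (\<lambda>r. delta p r - delta q r) \<in> comm_rel V arr x y"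
| add: "f \<in> comm_rel V arr x y \<Longrightarrow> g \<in> comm_rel V arr x y \<Longrightarrow>
         (\<lambda>r. f r + g r) \<in> comm_rel V arr x y"
| smult: "f \<in> comm_rel V arr x y \<Longrightarrow> (\<lambda>r. a * f r) \<in> comm_rel V arr x y"

text \<open>Source: the full subcategory on the object set S of the K-linear category
  of the quiver (VG, arrG) bound by all commutativity relations; its hom space
  Hom(x,y) is the quotient lin_paths x y / comm_rel x y, composition induced by pcomp.
  Target: the path category (no relations) of the quiver (VQ, arrQ).
  An isomorphism is a bijection F0 on objects together with, for all x y in S,
  a K-linear map Phi x y on representatives that vanishes on comm_rel x y and
  induces a linear bijection of the quotient onto Hom(F0 x, F0 y), and which is
  compatible with identities and composition.\<close>

definition lin_cat_iso ::
  "'a set \<Rightarrow> ('a \<Rightarrow> 'a \<Rightarrow> bool) \<Rightarrow> 'a set \<Rightarrow> 'b set \<Rightarrow> ('b \<Rightarrow> 'b \<Rightarrow> bool) \<Rightarrow>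
   ('a \<Rightarrow> 'b) \<Rightarrow> ('a \<Rightarrow> 'a \<Rightarrow> ('a list \<Rightarrow> 'k::field) \<Rightarrow> ('b list \<Rightarrow> 'k)) \<Rightarrow> bool" where
  "lin_cat_iso VG arrG S VQ arrQ F0 Phi \<longleftrightarrow>
     bij_betw F0 S VQ \<and>
     (\<forall>x\<in>S. \<forall>y\<in>S.
        (\<forall>f\<in>lin_paths VG arrG x y. Phi x y f \<in> lin_paths VQ arrQ (F0 x) (F0 y)) \<and>
        (\<forall>f\<in>lin_paths VG arrG x y. \<forall>g\<in>lin_paths VG arrG x y.
            Phi x y (\<lambda>r. f r + g r) = (\<lambda>r. Phi x y f r + Phi x y g r)) \<and>
        (\<forall>f\<in>lin_paths VG arrG x y. \<forall>a.
            Phi x y (\<lambda>r. a * f r) = (\<lambda>r. a * Phi x y f r)) \<and>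
        (\<forall>f\<in>comm_rel VG arrG x y. Phi x y f = (\<lambda>r. 0)) \<and>
        (\<forall>f\<in>lin_paths VG arrG x y. Phi x y f = (\<lambda>r. 0) \<longrightarrow> f \<in> comm_rel VG arrG x y) \<and>
        (\<forall>h\<in>lin_paths VQ arrQ (F0 x) (F0 y). \<exists>f\<in>lin_paths VG arrG x y. Phi x y f = h)) \<and>
     (\<forall>x\<in>S. Phi x x (delta [x]) = delta [F0 x]) \<and>
     (\<forall>x\<in>S. \<forall>y\<in>S. \<forall>z\<in>S. \<forall>f\<in>lin_paths VG arrG x y. \<forall>g\<in>lin_paths VG arrG y z.
        Phi x z (pcomp VG arrG x y z g f) =
        pcomp VQ arrQ (F0 x) (F0 y) (F0 z) (Phi y z g) (Phi x y f))"

definition grid_V :: "nat \<Rightarrow> (nat \<times> nat) set" where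
  "grid_V n = {(i, j). 1 \<le> i \<and> i \<le> 2 \<and> 1 \<le> j \<and> j \<le> n}"

definition grid_arr :: "nat \<Rightarrow> nat \<times> nat \<Rightarrow> nat \<times> nat \<Rightarrow> bool" where
  "grid_arr n u v \<longleftrightarrow> u \<in> grid_V n \<and> v \<in> grid_V n \<and>
     ((fst v = fst u \<and> snd v = snd u + 1) \<or> (fst u = 1 \<and> fst v = 2 \<and> snd v = snd u))"

definition grid_intervals :: "nat \<Rightarrow> (nat \<times> nat) set set" where
  "grid_intervals n = {I. I \<noteq> {} \<and> I \<subseteq> grid_V n \<and>
     (\<forall>x\<in>I. \<forall>y\<in>I. (\<lambda>a b. a \<in> I \<and> b \<in> I \<and> (grid_arr n a b \<or> grid_arr n b a))\<^sup>*\<^sup>* x y) \<and>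
     (\<forall>x\<in>I. \<forall>y\<in>I. \<forall>z. (grid_arr n)\<^sup>*\<^sup>* x z \<longrightarrow> (grid_arr n)\<^sup>*\<^sup>* z y \<longrightarrow> z \<in> I)}"

definition ss_vertices :: "nat \<Rightarrow> (nat \<times> nat) set \<Rightarrow> (nat \<times> nat) set" where
  "ss_vertices n I = {x \<in> I. (\<not> (\<exists>u\<in>I. grid_arr n u x)) \<or> (\<not> (\<exists>w\<in>I. grid_arr n x w))}"

definition five_quivers :: "(nat \<times> (nat \<Rightarrow> nat \<Rightarrow> bool)) set" where
  "five_quivers =
     {(1, \<lambda>a b. False),
      (2, \<lambda>a b. a = 0 \<and> b = 1),
      (3, \<lambda>a b. (a = 0 \<and> b = 1) \<or> (a = 2 \<and> b = 1)),
      (3, \<lambda>a b. (a = 1 \<and> b = 0) \<or> (a = 1 \<and> b = 2)),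
      (4, \<lambda>a b. (a = 0 \<and> b = 1) \<or> (a = 2 \<and> b = 1) \<or> (a = 2 \<and> b = 3))}"

end

theory Submission
  imports Defs
begin



lemma succ_nth: "(\<forall>i. Suc i < length p \<longrightarrow> arr (p ! i) (p ! Suc i)) \<longleftrightarrow> successively arr p"
proof (induction arr p rule: successively.induct)
  case (3 P x y xs)
  show ?case
  proof
    assume H: "\<forall>i. Suc i < length (x # y # xs) \<longrightarrow> P ((x # y # xs) ! i) ((x # y # xs) ! Suc i)"
    have "P x y" using H[rule_format, of 0] by simp
    moreover have "\<forall>i. Suc i < length (y # xs) \<longrightarrow> P ((y # xs) ! i) ((y # xs) ! Suc i)"
      using H by (metis Suc_less_eq length_Cons nth_Cons_Suc)
    ultimately show "successively P (x # y # xs)" using 3 by simp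
  next
    assume "successively P (x # y # xs)"
    then have "P x y" "\<forall>i. Suc i < length (y # xs) \<longrightarrow> P ((y # xs) ! i) ((y # xs) ! Suc i)" using 3 by auto
    then show "\<forall>i. Suc i < length (x # y # xs) \<longrightarrow> P ((x # y # xs) ! i) ((x # y # xs) ! Suc i)"
      by (metis Suc_less_eq length_Cons less_Suc_eq_0_disj nth_Cons_0 nth_Cons_Suc)
  qed
qed auto

lemma is_path_alt: "is_path V P x y p \<longleftrightarrow> p \<noteq> [] \<and> hd p = x \<and> last p = y \<and> set p \<subseteq> V \<and> successively P p"
  unfolding is_path_def succ_nth by simp

lemma path_concat:
  assumes "p \<in> paths V arr x y" "q \<in> paths V arr y z"
  shows "p @ tl q \<in> paths V arr x z"
proof -
  from assms have p: "p \<noteq> []" "hd p = x" "last p = y" "set p \<subseteq> V" "successively arr p"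
    and q: "q \<noteq> []" "hd q = y" "last q = z" "set q \<subseteq> V" "successively arr q"
    by (auto simp: paths_def is_path_alt)
  obtain b qs where qq: "q = b # qs" using q(1) by (cases q) auto
  have b: "b = y" using q qq by simp
  show ?thesis
  proof (cases qs)
    case Nil
    then show ?thesis using p q qq by (auto simp: paths_def is_path_alt)
  next
    case (Cons c cs)
    have "successively arr (b # qs)" using q qq by simp
    then have "arr b c" "successively arr qs" using Cons by auto
    then show ?thesis using p q qq Cons b
      by (auto simp: paths_def is_path_alt successively_append_iff)
  qed
qed

lemma paths_singleton_in: "x \<in> V \<Longrightarrow> [x] \<in> paths V arr x x"
  by (auto simp: paths_def is_path_alt)




lemma comm_rel_sum0:
  assumes "f \<in> comm_rel V arr x y" "finite (paths V arr x y)"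
  shows "(\<Sum>p\<in>paths V arr x y. f p) = (0::'k::field)"
  using assms(1)
proof induction
  case (diff p q)
  then show ?case using assms(2)
    by (simp add: sum_subtractf delta_def)
next
  case (add f g) then show ?case by (simp add: sum.distrib)
next
  case (smult f a) then show ?case by (simp add: sum_distrib_left[symmetric])
qed simp

lemma comm_rel_of_sum0:
  assumes fin: "finite (paths V arr x y)" and f: "f \<in> lin_paths V arr x y"
    and s: "(\<Sum>p\<in>paths V arr x y. f p) = (0::'k::field)"
  shows "f \<in> comm_rel V arr x y"
proof (cases "paths V arr x y = {}")
  case True
  then have "f = (\<lambda>r. 0)" using f by (auto simp: lin_paths_def)
  then show ?thesis by (simp add: comm_rel.zero)
next
  case False
  then obtain p0 where p0: "p0 \<in> paths V arr x y" by auto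
  have gen: "A \<subseteq> paths V arr x y \<Longrightarrow>
      (\<lambda>r. (if r \<in> A then f r else 0) - (\<Sum>p\<in>A. f p) * delta p0 r) \<in> comm_rel V arr x y" for A
  proof -
    assume sub: "A \<subseteq> paths V arr x y"
    have "finite A" using sub fin finite_subset by blast
    then show ?thesis using sub
    proof (induction A rule: finite_induct)
    case empty
    have "(\<lambda>r. (if r \<in> {} then f r else 0) - (\<Sum>p\<in>{}. f p) * delta p0 r) = (\<lambda>r. 0)" by simp
    then show ?case using comm_rel.zero by metis
  next
    case (insert a F)
    have e: "(\<lambda>r. (if r \<in> insert a F then f r else 0) - (\<Sum>p\<in>insert a F. f p) * delta p0 r)
      = (\<lambda>r. ((if r \<in> F then f r else 0) - (\<Sum>p\<in>F. f p) * delta p0 r) + f a * (delta a r - delta p0 r))"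
      using insert by (auto simp: delta_def algebra_simps)
    have "(\<lambda>r. f a * (delta a r - delta p0 r)) \<in> comm_rel V arr x y"
      using insert p0 by (intro comm_rel.smult comm_rel.diff) auto
    then show ?case unfolding e using insert by (intro comm_rel.add) auto
  qed
  qed
  have "(\<lambda>r. (if r \<in> paths V arr x y then f r else 0) - (\<Sum>p\<in>paths V arr x y. f p) * delta p0 r) = f"
    using f s by (auto simp: lin_paths_def fun_eq_iff)
  then show ?thesis using gen[of "paths V arr x y"] by simp
qed

lemma paths_Q:
  assumes irr: "\<And>a. \<not> arrQ a a" and nocomp: "\<And>a b c. arrQ a b \<Longrightarrow> arrQ b c \<Longrightarrow> False"
    and inV: "\<And>a b. arrQ a b \<Longrightarrow> a < k \<and> b < k"
  shows "paths {..<k} arrQ a b = (if a = b \<and> a < k then {[a]} else if arrQ a b then {[a,b]} else {})"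
proof -
  have "is_path {..<k} arrQ a b p \<longleftrightarrow> (a = b \<and> a < k \<and> p = [a]) \<or> (arrQ a b \<and> p = [a,b])" for p
  proof
    assume H: "is_path {..<k} arrQ a b p"
    then have h: "p \<noteq> []" "hd p = a" "last p = b" "set p \<subseteq> {..<k}" "successively arrQ p"
      by (auto simp: is_path_alt)
    show "(a = b \<and> a < k \<and> p = [a]) \<or> (arrQ a b \<and> p = [a,b])"
    proof (cases p)
      case Nil then show ?thesis using h by simp
    next
      case (Cons c ps)
      show ?thesis
      proof (cases ps)
        case Nil then show ?thesis using h Cons by auto
      next
        case (Cons d qs)
        show ?thesis
        proof (cases qs)
          case Nil then show ?thesis using h Cons \<open>p = c # ps\<close> by auto
        next
          case (Cons e rs)
          then show ?thesis using h \<open>ps = d # qs\<close> \<open>p = c # ps\<close> nocomp by auto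
        qed
      qed
    qed
  next
    assume "(a = b \<and> a < k \<and> p = [a]) \<or> (arrQ a b \<and> p = [a,b])"
    then show "is_path {..<k} arrQ a b p" using inV by (auto simp: is_path_alt)
  qed
  then show ?thesis using irr by (auto simp: paths_def)
qed




lemma iso_generic:
  fixes VG :: "'a set" and F0 :: "'a \<Rightarrow> nat"
  assumes fin: "\<And>x y. finite (paths VG arrG x y)"
    and SV: "S \<subseteq> VG"
    and bij: "bij_betw F0 S {..<k}"
    and irr: "\<And>a. \<not> arrQ a a" and nocomp: "\<And>a b c. arrQ a b \<Longrightarrow> arrQ b c \<Longrightarrow> False"
    and inV: "\<And>a b. arrQ a b \<Longrightarrow> a < k \<and> b < k"
    and reach: "\<And>x y. x \<in> S \<Longrightarrow> y \<in> S \<Longrightarrow> paths VG arrG x y \<noteq> {} \<longleftrightarrow> (x = y \<or> arrQ (F0 x) (F0 y))"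
  defines "tp \<equiv> \<lambda>x y. if x = y then [F0 x] else [F0 x, F0 y]"
  shows "lin_cat_iso VG arrG S {..<k} arrQ F0
     (\<lambda>x y (f::'a list \<Rightarrow> 'k::field) r. if r = tp x y then (\<Sum>p\<in>paths VG arrG x y. f p) else 0)"
proof -
  let ?P = "paths VG arrG"
  define Phi where "Phi = (\<lambda>x y (f::'a list \<Rightarrow> 'k::field) r. if r = tp x y then (\<Sum>p\<in>?P x y. f p) else 0)"
  have inj: "x \<in> S \<Longrightarrow> y \<in> S \<Longrightarrow> F0 x = F0 y \<longleftrightarrow> x = y" for x y
    using bij by (auto simp: bij_betw_def inj_on_def)
  have Fk: "x \<in> S \<Longrightarrow> F0 x < k" for x using bij by (auto simp: bij_betw_def)
  have pQ: "paths {..<k} arrQ (F0 x) (F0 y) = (if ?P x y = {} then {} else {tp x y})"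
    if "x \<in> S" "y \<in> S" for x y
    using paths_Q[of arrQ k, OF irr nocomp inV] reach[OF that] inj[OF that] Fk[OF that(1)]
    by (auto simp: tp_def)
  have tpc: "tp x y @ tl (tp y z) = tp x z"
    if "x \<in> S" "y \<in> S" "z \<in> S" "?P x y \<noteq> {}" "?P y z \<noteq> {}" for x y z
    using reach[OF that(1,2)] reach[OF that(2,3)] that nocomp by (auto simp: tp_def)
  have sumc: "(\<Sum>r\<in>?P x z. pcomp VG arrG x y z g f r) = (\<Sum>p\<in>?P x y. f p) * (\<Sum>q\<in>?P y z. g q)"
    for x y z and f g :: "'a list \<Rightarrow> 'k"
  proof -
    have "(\<Sum>r\<in>?P x z. pcomp VG arrG x y z g f r)
       = (\<Sum>r\<in>?P x z. \<Sum>p\<in>?P x y. \<Sum>q\<in>?P y z. if p @ tl q = r then f p * g q else 0)"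
      by (simp add: pcomp_def)
    also have "\<dots> = (\<Sum>p\<in>?P x y. \<Sum>r\<in>?P x z. \<Sum>q\<in>?P y z. if p @ tl q = r then f p * g q else 0)"
      by (rule sum.swap)
    also have "\<dots> = (\<Sum>p\<in>?P x y. \<Sum>q\<in>?P y z. \<Sum>r\<in>?P x z. if p @ tl q = r then f p * g q else 0)"
      by (rule sum.cong[OF refl], rule sum.swap)
    also have "\<dots> = (\<Sum>p\<in>?P x y. \<Sum>q\<in>?P y z. f p * g q)"
      using fin by (intro sum.cong refl) (simp add: sum.delta path_concat)
    also have "\<dots> = (\<Sum>p\<in>?P x y. f p) * (\<Sum>q\<in>?P y z. g q)"
      by (simp add: sum_product)
    finally show ?thesis .
  qed
  have PhiQ: "\<forall>f. Phi x y f \<in> lin_paths {..<k} arrQ (F0 x) (F0 y)" if "x \<in> S" "y \<in> S" for x y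
    unfolding lin_paths_def Phi_def pQ[OF that] by auto
  have part1: "\<forall>x\<in>S. \<forall>y\<in>S.
        (\<forall>f\<in>lin_paths VG arrG x y. Phi x y f \<in> lin_paths {..<k} arrQ (F0 x) (F0 y)) \<and>
        (\<forall>f\<in>lin_paths VG arrG x y. \<forall>g\<in>lin_paths VG arrG x y.
            Phi x y (\<lambda>r. f r + g r) = (\<lambda>r. Phi x y f r + Phi x y g r)) \<and>
        (\<forall>f\<in>lin_paths VG arrG x y. \<forall>a.
            Phi x y (\<lambda>r. a * f r) = (\<lambda>r. a * Phi x y f r)) \<and>
        (\<forall>f\<in>comm_rel VG arrG x y. Phi x y f = (\<lambda>r. 0)) \<and>
        (\<forall>f\<in>lin_paths VG arrG x y. Phi x y f = (\<lambda>r. 0) \<longrightarrow> f \<in> comm_rel VG arrG x y) \<and>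
        (\<forall>h\<in>lin_paths {..<k} arrQ (F0 x) (F0 y). \<exists>f\<in>lin_paths VG arrG x y. Phi x y f = h)"
  proof (intro ballI conjI allI impI)
    fix x y assume xy: "x \<in> S" "y \<in> S"
    show "Phi x y f \<in> lin_paths {..<k} arrQ (F0 x) (F0 y)" for f using PhiQ[OF xy] by blast
    show "Phi x y (\<lambda>r. f r + g r) = (\<lambda>r. Phi x y f r + Phi x y g r)" for f g
      by (simp add: Phi_def fun_eq_iff sum.distrib)
    show "Phi x y (\<lambda>r. a * f r) = (\<lambda>r. a * Phi x y f r)" for f a
      by (simp add: Phi_def fun_eq_iff sum_distrib_left)
    show "Phi x y f = (\<lambda>r. 0)" if "f \<in> comm_rel VG arrG x y" for f
      using comm_rel_sum0[OF that fin] by (simp add: Phi_def fun_eq_iff)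
    show "f \<in> comm_rel VG arrG x y" if "f \<in> lin_paths VG arrG x y" "Phi x y f = (\<lambda>r. 0)" for f
    proof -
      have "Phi x y f (tp x y) = 0" using that(2) by simp
      then have "(\<Sum>p\<in>?P x y. f p) = 0" by (simp add: Phi_def)
      then show ?thesis using comm_rel_of_sum0[OF fin that(1)] by simp
    qed
    show "\<exists>f\<in>lin_paths VG arrG x y. Phi x y f = h" if h: "h \<in> lin_paths {..<k} arrQ (F0 x) (F0 y)" for h
    proof (cases "?P x y = {}")
      case True
      then have "h = (\<lambda>r. 0)" using h pQ[OF xy] by (auto simp: lin_paths_def fun_eq_iff)
      then show ?thesis using True
        by (intro bexI[of _ "\<lambda>r. 0"]) (auto simp: Phi_def lin_paths_def fun_eq_iff)
    next
      case False
      then obtain p0 where p0: "p0 \<in> ?P x y" by auto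
      have hs: "h r = (if r = tp x y then h (tp x y) else 0)" for r
        using h pQ[OF xy] False by (auto simp: lin_paths_def)
      show ?thesis
      proof (intro bexI[of _ "\<lambda>r. if r = p0 then h (tp x y) else 0"])
        show "(\<lambda>r. if r = p0 then h (tp x y) else 0) \<in> lin_paths VG arrG x y"
          using p0 by (simp add: lin_paths_def)
        have "(\<Sum>p\<in>?P x y. if p = p0 then h (tp x y) else 0) = h (tp x y)"
          using p0 fin[of x y] by (simp add: sum.delta)
        then show "Phi x y (\<lambda>r. if r = p0 then h (tp x y) else 0) = h"
          unfolding Phi_def fun_eq_iff using hs by metis
      qed
    qed
  qed
  have part2: "\<forall>x\<in>S. Phi x x (delta [x]) = delta [F0 x]"
  proof
    fix x assume x: "x \<in> S"
    have m: "[x] \<in> ?P x x" using paths_singleton_in[of x VG arrG] x SV by auto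
    have "(\<Sum>p\<in>?P x x. delta [x] p) = (\<Sum>p\<in>?P x x. if p = [x] then (1::'k) else 0)"
      unfolding delta_def by (rule refl)
    also have "\<dots> = 1" using m fin[of x x] by (simp only: sum.delta) simp
    finally have s1: "(\<Sum>p\<in>?P x x. delta [x] p) = (1::'k)" .
    show "Phi x x (delta [x]) = delta [F0 x]"
      unfolding Phi_def tp_def fun_eq_iff using s1 by (simp add: delta_def)
  qed
  have part3: "\<forall>x\<in>S. \<forall>y\<in>S. \<forall>z\<in>S. \<forall>f\<in>lin_paths VG arrG x y. \<forall>g\<in>lin_paths VG arrG y z.
        Phi x z (pcomp VG arrG x y z g f) =
        pcomp {..<k} arrQ (F0 x) (F0 y) (F0 z) (Phi y z g) (Phi x y f)"
  proof (intro ballI)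
    fix x y z f g assume xyz: "x \<in> S" "y \<in> S" "z \<in> S"
    show "Phi x z (pcomp VG arrG x y z g f) =
        pcomp {..<k} arrQ (F0 x) (F0 y) (F0 z) (Phi y z g) (Phi x y f)"
    proof (cases "?P x y = {} \<or> ?P y z = {}")
      case True
      then have "(\<Sum>p\<in>?P x y. f p) * (\<Sum>q\<in>?P y z. g q) = 0" by auto
      then have L: "Phi x z (pcomp VG arrG x y z g f) = (\<lambda>r. 0)"
        by (simp add: Phi_def sumc fun_eq_iff)
      have "Phi x y f = (\<lambda>r. 0) \<or> Phi y z g = (\<lambda>r. 0)" using True by (auto simp: Phi_def)
      then have "pcomp {..<k} arrQ (F0 x) (F0 y) (F0 z) (Phi y z g) (Phi x y f) = (\<lambda>r. 0)"
        by (elim disjE) (auto simp: pcomp_def fun_eq_iff intro!: sum.neutral)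
      then show ?thesis using L by simp
    next
      case False
      have L: "Phi x z (pcomp VG arrG x y z g f) = (\<lambda>r. if r = tp x z then
          (\<Sum>p\<in>?P x y. f p) * (\<Sum>q\<in>?P y z. g q) else 0)"
        unfolding Phi_def sumc[of x y z g f] by (rule refl)
      show ?thesis unfolding L
        using False pQ[OF xyz(1,2)] pQ[OF xyz(2,3)] tpc[OF xyz]
        by (auto simp: Phi_def pcomp_def fun_eq_iff)
    qed
  qed
  show ?thesis
    unfolding lin_cat_iso_def Phi_def[symmetric] using bij part1 part2 part3 by blast
qed




lemma gridV_iff: "(i,j) \<in> grid_V n \<longleftrightarrow> 1 \<le> i \<and> i \<le> 2 \<and> 1 \<le> j \<and> j \<le> n"
  by (simp add: grid_V_def)

lemma finite_gridV: "finite (grid_V n)"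
proof -
  have "grid_V n \<subseteq> {1..2} \<times> {1..n}" by (auto simp: grid_V_def)
  then show ?thesis by (rule finite_subset) simp
qed

lemma reach_le: "(grid_arr n)\<^sup>*\<^sup>* x y \<Longrightarrow> x \<in> grid_V n \<Longrightarrow> y \<in> grid_V n \<and> fst x \<le> fst y \<and> snd x \<le> snd y"
  by (induction rule: rtranclp_induct) (auto simp: grid_arr_def)

lemma reach_horiz:
  assumes "(i,j) \<in> grid_V n" "j \<le> m" "m \<le> n"
  shows "(grid_arr n)\<^sup>*\<^sup>* (i,j) (i,m)"
  using assms(2,3)
proof (induction m rule: dec_induct)
  case base then show ?case by simp
next
  case (step m)
  then have "(grid_arr n)\<^sup>*\<^sup>* (i,j) (i,m)" by simp
  moreover have "grid_arr n (i,m) (i,Suc m)" using assms(1) step by (auto simp: grid_arr_def grid_V_def)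
  ultimately show ?case by (rule rtranclp.rtrancl_into_rtrancl)
qed

lemma le_reach:
  assumes "x \<in> grid_V n" "y \<in> grid_V n" "fst x \<le> fst y" "snd x \<le> snd y"
  shows "(grid_arr n)\<^sup>*\<^sup>* x y"
proof -
  obtain i j i' j' where xy: "x = (i,j)" "y = (i',j')" by (cases x, cases y) auto
  have h: "(grid_arr n)\<^sup>*\<^sup>* (i,j) (i,j')" using assms xy by (intro reach_horiz) (auto simp: grid_V_def)
  show ?thesis
  proof (cases "i = i'")
    case True then show ?thesis using h xy by simp
  next
    case False
    then have "i = 1" "i' = 2" using assms xy by (auto simp: grid_V_def)
    then have "grid_arr n (i,j') (i',j')" using assms xy by (auto simp: grid_V_def grid_arr_def)
    then show ?thesis using h xy by (metis rtranclp.rtrancl_into_rtrancl)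
  qed
qed

lemma reach_iff: "x \<in> grid_V n \<Longrightarrow> (grid_arr n)\<^sup>*\<^sup>* x y \<longleftrightarrow> y \<in> grid_V n \<and> fst x \<le> fst y \<and> snd x \<le> snd y"
  using reach_le le_reach by blast

lemma succ_reach: "p \<noteq> [] \<Longrightarrow> successively arr p \<Longrightarrow> arr\<^sup>*\<^sup>* (hd p) (last p)"
proof (induction p)
  case (Cons a ps)
  show ?case
  proof (cases ps)
    case Nil then show ?thesis by simp
  next
    case (Cons b qs)
    then have "arr a b" "successively arr ps" using Cons.prems by auto
    then have "arr\<^sup>*\<^sup>* b (last ps)" using Cons.IH Cons by simp
    then show ?thesis using \<open>arr a b\<close> Cons by (auto intro: converse_rtranclp_into_rtranclp)
  qed
qed simp

lemma reach_path:
  assumes "arr\<^sup>*\<^sup>* x y" "\<And>a b. arr a b \<Longrightarrow> a \<in> V \<and> b \<in> V" "x \<in> V"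
  shows "\<exists>p. is_path V arr x y p"
  using assms(1,3)
proof (induction rule: converse_rtranclp_induct)
  case base then show ?case by (intro exI[of _ "[y]"]) (auto simp: is_path_alt)
next
  case (step x z)
  then obtain p where p: "is_path V arr z y p" using assms(2) by blast
  then show ?case using step assms(2)
    by (intro exI[of _ "x # p"]) (auto simp: is_path_alt successively_Cons)
qed

lemma paths_ne_iff:
  assumes "x \<in> grid_V n"
  shows "paths (grid_V n) (grid_arr n) x y \<noteq> {} \<longleftrightarrow> y \<in> grid_V n \<and> fst x \<le> fst y \<and> snd x \<le> snd y"
proof -
  have "paths (grid_V n) (grid_arr n) x y \<noteq> {} \<longleftrightarrow> (grid_arr n)\<^sup>*\<^sup>* x y"
  proof
    assume "paths (grid_V n) (grid_arr n) x y \<noteq> {}"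
    then obtain p where "is_path (grid_V n) (grid_arr n) x y p" by (auto simp: paths_def)
    then have "p \<noteq> []" "hd p = x" "last p = y" "successively (grid_arr n) p" by (auto simp: is_path_alt)
    then show "(grid_arr n)\<^sup>*\<^sup>* x y" using succ_reach[of p "grid_arr n"] by simp
  next
    assume "(grid_arr n)\<^sup>*\<^sup>* x y"
    then show "paths (grid_V n) (grid_arr n) x y \<noteq> {}"
    proof -
      have "\<And>a b. grid_arr n a b \<Longrightarrow> a \<in> grid_V n \<and> b \<in> grid_V n" by (simp add: grid_arr_def)
      then obtain p where "is_path (grid_V n) (grid_arr n) x y p"
        using reach_path[of "grid_arr n" x y "grid_V n"] assms \<open>(grid_arr n)\<^sup>*\<^sup>* x y\<close> by blast
      then show ?thesis by (auto simp: paths_def)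
    qed
  qed
  then show ?thesis using reach_iff[OF assms] by simp
qed

lemma weight_nth:
  assumes "successively (grid_arr n) p" "i < length p"
  shows "fst (p!i) + snd (p!i) = fst (p!0) + snd (p!0) + i"
  using assms(2)
proof (induction i)
  case (Suc i)
  have "grid_arr n (p!i) (p!Suc i)" using assms(1) Suc.prems succ_nth by metis
  then show ?case using Suc by (auto simp: grid_arr_def)
qed simp

lemma finite_paths: "finite (paths (grid_V n) (grid_arr n) x y)"
proof -
  have "paths (grid_V n) (grid_arr n) x y \<subseteq> {p. set p \<subseteq> grid_V n \<and> length p \<le> n + 3}"
  proof
    fix p assume "p \<in> paths (grid_V n) (grid_arr n) x y"
    then have p: "p \<noteq> []" "set p \<subseteq> grid_V n" "successively (grid_arr n) p"
      by (auto simp: paths_def is_path_alt)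
    have l: "length p - 1 < length p" using p by simp
    have "p ! (length p - 1) \<in> grid_V n" "p ! 0 \<in> grid_V n" using p l nth_mem by auto
    then have "fst (p ! (length p - 1)) + snd (p ! (length p - 1)) \<le> n + 2"
      "fst (p!0) + snd (p!0) \<ge> 2"
      by (auto simp: grid_V_def)
    then show "p \<in> {p. set p \<subseteq> grid_V n \<and> length p \<le> n + 3}"
      using weight_nth[OF p(3) l] p by auto
  qed
  then show ?thesis using finite_lists_length_le[OF finite_gridV] finite_subset by blast
qed




lemma iso_list:
  fixes xs :: "(nat \<times> nat) list"
  assumes dist: "distinct xs" and inV: "set xs \<subseteq> grid_V n"
    and irr: "\<And>a. \<not> arrQ a a" and nocomp: "\<And>a b c. arrQ a b \<Longrightarrow> arrQ b c \<Longrightarrow> False"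
    and inQ: "\<And>a b. arrQ a b \<Longrightarrow> a < length xs \<and> b < length xs"
    and cond: "\<forall>i<length xs. \<forall>j<length xs.
       (fst (xs!i) \<le> fst (xs!j) \<and> snd (xs!i) \<le> snd (xs!j)) \<longleftrightarrow> (i = j \<or> arrQ i j)"
  shows "\<exists>F0 (Phi :: nat \<times> nat \<Rightarrow> nat \<times> nat \<Rightarrow> ((nat \<times> nat) list \<Rightarrow> 'k::field) \<Rightarrow> (nat list \<Rightarrow> 'k)).
     lin_cat_iso (grid_V n) (grid_arr n) (set xs) {..<length xs} arrQ F0 Phi"
proof -
  have b: "bij_betw ((!) xs) {..<length xs} (set xs)" using dist by (rule bij_betw_nth) auto
  define F0 where "F0 = inv_into {..<length xs} ((!) xs)"
  have bF: "bij_betw F0 (set xs) {..<length xs}" unfolding F0_def by (rule bij_betw_inv_into[OF b])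
  have F0n: "i < length xs \<Longrightarrow> F0 (xs!i) = i" for i
    unfolding F0_def using b by (simp add: bij_betw_def)
  have reach: "paths (grid_V n) (grid_arr n) x y \<noteq> {} \<longleftrightarrow> (x = y \<or> arrQ (F0 x) (F0 y))"
    if xin: "x \<in> set xs" and yin: "y \<in> set xs" for x y
  proof -
    obtain i where i: "i < length xs" "x = xs!i"
      using xin by (auto simp: in_set_conv_nth)
    obtain j where j: "j < length xs" "y = xs!j"
      using yin by (auto simp: in_set_conv_nth)
    note ij = i(1) j(1) i(2) j(2)
    have "paths (grid_V n) (grid_arr n) x y \<noteq> {} \<longleftrightarrow> fst x \<le> fst y \<and> snd x \<le> snd y"
      using paths_ne_iff[of x n y] xin yin inV by auto
    also have "\<dots> \<longleftrightarrow> i = j \<or> arrQ i j" using cond ij by simp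
    also have "\<dots> \<longleftrightarrow> x = y \<or> arrQ (F0 x) (F0 y)"
      using ij F0n dist by (simp add: nth_eq_iff_index_eq)
    finally show ?thesis .
  qed
  show ?thesis
    apply (rule exI[of _ F0])
    apply (rule exI)
    apply (rule iso_generic[OF finite_paths inV bF irr nocomp inQ reach])
      apply assumption+
    done
qed




lemma ss_one_row:
  assumes "r = 1 \<or> r = 2" "1 \<le> a" "a \<le> b" "b \<le> n" "I = {(r,j) | j. a \<le> j \<and> j \<le> b}"
  shows "ss_vertices n I = {(r,a),(r,b)}"
proof -
  have "x \<in> ss_vertices n I \<longleftrightarrow> x = (r,a) \<or> x = (r,b)" for x
  proof (cases x)
    case (Pair i j)
    show ?thesis
    proof
      assume "x \<in> ss_vertices n I"
      then have xI: "(i,j) \<in> I" and ss: "(\<not> (\<exists>u\<in>I. grid_arr n u (i,j))) \<or> (\<not> (\<exists>w\<in>I. grid_arr n (i,j) w))"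
        using Pair by (auto simp: ss_vertices_def)
      have ij: "i = r" "a \<le> j" "j \<le> b" using xI assms(5) by auto
      show "x = (r,a) \<or> x = (r,b)"
      proof (rule ccontr)
        assume "\<not> (x = (r,a) \<or> x = (r,b))"
        then have "a < j" "j < b" using ij Pair by auto
        then have "grid_arr n (r, j - 1) (i,j)" "grid_arr n (i,j) (r, j + 1)" "(r, j-1) \<in> I" "(r, j+1) \<in> I"
          using ij assms by (auto simp: grid_arr_def grid_V_def)
        then show False using ss by blast
      qed
    next
      assume "x = (r,a) \<or> x = (r,b)"
      then show "x \<in> ss_vertices n I"
      proof
        assume x: "x = (r,a)"
        have "\<not> (\<exists>u\<in>I. grid_arr n u (r,a))" using assms by (auto simp: grid_arr_def)
        then show ?thesis using x assms by (auto simp: ss_vertices_def)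
      next
        assume x: "x = (r,b)"
        have "\<not> (\<exists>w\<in>I. grid_arr n (r,b) w)" using assms by (auto simp: grid_arr_def)
        then show ?thesis using x assms by (auto simp: ss_vertices_def)
      qed
    qed
  qed
  then show ?thesis by auto
qed

lemma ss_two_rows:
  assumes "1 \<le> a2" "a2 \<le> a1" "a1 \<le> b2" "b2 \<le> b1" "b1 \<le> n"
    and I: "I = {(1,j) | j. a1 \<le> j \<and> j \<le> b1} \<union> {(2,j) | j. a2 \<le> j \<and> j \<le> b2}"
  shows "ss_vertices n I = {(1,a1),(2,b2)} \<union> (if a2 < a1 then {(2,a2)} else {}) \<union> (if b2 < b1 then {(1,b1)} else {})"
proof -
  have "x \<in> ss_vertices n I \<longleftrightarrow> x = (1,a1) \<or> x = (2,b2) \<or> (a2 < a1 \<and> x = (2,a2)) \<or> (b2 < b1 \<and> x = (1,b1))" for x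
  proof (cases x)
    case (Pair i j)
    show ?thesis
    proof
      assume "x \<in> ss_vertices n I"
      then have xI: "(i,j) \<in> I" and ss: "(\<not> (\<exists>u\<in>I. grid_arr n u (i,j))) \<or> (\<not> (\<exists>w\<in>I. grid_arr n (i,j) w))"
        using Pair by (auto simp: ss_vertices_def)
      show "x = (1,a1) \<or> x = (2,b2) \<or> (a2 < a1 \<and> x = (2,a2)) \<or> (b2 < b1 \<and> x = (1,b1))"
      proof (rule ccontr)
        assume nx: "\<not> ?thesis"
        have "(i = 1 \<and> a1 \<le> j \<and> j \<le> b1) \<or> (i = 2 \<and> a2 \<le> j \<and> j \<le> b2)" using xI I by auto
        then show False
        proof
          assume h: "i = 1 \<and> a1 \<le> j \<and> j \<le> b1"
          then have "a1 < j" using nx Pair by auto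
          then have in1: "grid_arr n (1, j - 1) (i,j)" "(1, j-1) \<in> I"
            using h assms by (auto simp: grid_arr_def grid_V_def)
          have "(j < b1 \<and> (1, j+1) \<in> I \<and> grid_arr n (i,j) (1, j + 1)) \<or> (j \<le> b2 \<and> (2, j) \<in> I \<and> grid_arr n (i,j) (2, j))"
            using h nx Pair assms \<open>a1 < j\<close> by (auto simp: grid_arr_def grid_V_def)
          then show False using ss in1 by blast
        next
          assume h: "i = 2 \<and> a2 \<le> j \<and> j \<le> b2"
          then have "j < b2" using nx Pair by auto
          then have out: "grid_arr n (i,j) (2, j + 1)" "(2, j+1) \<in> I"
            using h assms by (auto simp: grid_arr_def grid_V_def)
          have "(a2 < j \<and> (2, j - 1) \<in> I \<and> grid_arr n (2, j - 1) (i,j)) \<or> (a1 \<le> j \<and> (1, j) \<in> I \<and> grid_arr n (1, j) (i,j))"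
            using h nx Pair assms \<open>j < b2\<close> by (auto simp: grid_arr_def grid_V_def)
          then show False using ss out by blast
        qed
      qed
    next
      assume H: "x = (1,a1) \<or> x = (2,b2) \<or> (a2 < a1 \<and> x = (2,a2)) \<or> (b2 < b1 \<and> x = (1,b1))"
      have s1: "\<not> (\<exists>u\<in>I. grid_arr n u (1,a1))" using assms by (auto simp: grid_arr_def)
      have s2: "\<not> (\<exists>w\<in>I. grid_arr n (2,b2) w)" using assms by (auto simp: grid_arr_def)
      have s3: "a2 < a1 \<Longrightarrow> \<not> (\<exists>u\<in>I. grid_arr n u (2,a2))" using assms by (auto simp: grid_arr_def)
      have s4: "b2 < b1 \<Longrightarrow> \<not> (\<exists>w\<in>I. grid_arr n (1,b1) w)" using assms by (auto simp: grid_arr_def)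
      have m: "(1,a1) \<in> I" "(2,b2) \<in> I" "(2,a2) \<in> I" "(1,b1) \<in> I" using assms by auto
      show "x \<in> ss_vertices n I" using H s1 s2 s3 s4 m unfolding ss_vertices_def by blast
    qed
  qed
  then show ?thesis by auto
qed




lemma interval_basic:
  assumes "I \<in> grid_intervals n"
  shows "I \<noteq> {}" "I \<subseteq> grid_V n"
  using assms by (auto simp: grid_intervals_def)

lemma interval_conv:
  assumes "I \<in> grid_intervals n" "x \<in> I" "y \<in> I" "z \<in> grid_V n"
    "fst x \<le> fst z" "snd x \<le> snd z" "fst z \<le> fst y" "snd z \<le> snd y"
  shows "z \<in> I"
proof -
  have V: "x \<in> grid_V n" "y \<in> grid_V n" using assms(2,3) interval_basic(2)[OF assms(1)] by auto
  have "(grid_arr n)\<^sup>*\<^sup>* x z" using reach_iff[OF V(1)] assms by auto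
  moreover have "(grid_arr n)\<^sup>*\<^sup>* z y" using reach_iff[OF assms(4)] assms V by auto
  ultimately show ?thesis using assms(1-3) unfolding grid_intervals_def by blast
qed

lemma interval_conn:
  assumes I: "I \<in> grid_intervals n" and a: "(1,j) \<in> I" and b: "(2,j') \<in> I"
  shows "\<exists>t. (1,t) \<in> I \<and> (2,t) \<in> I"
proof -
  let ?E = "\<lambda>a b. a \<in> I \<and> b \<in> I \<and> (grid_arr n a b \<or> grid_arr n b a)"
  have c: "?E\<^sup>*\<^sup>* (1,j) (2,j')" using I a b unfolding grid_intervals_def by blast
  have "?E\<^sup>*\<^sup>* (1,j) y \<Longrightarrow> fst y = 1 \<or> (\<exists>t. (1,t) \<in> I \<and> (2,t) \<in> I)" for y
  proof (induction rule: rtranclp_induct)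
    case base then show ?case by simp
  next
    case (step y z)
    show ?case
    proof (cases "(\<exists>t. (1,t) \<in> I \<and> (2,t) \<in> I) \<or> fst z = 1")
      case True then show ?thesis by blast
    next
      case False
      then have f: "fst y = 1" "fst z \<noteq> 1" using step by auto
      have "grid_arr n y z" using step(2) f by (auto simp: grid_arr_def)
      then have "snd z = snd y" "fst z = 2" using f by (auto simp: grid_arr_def)
      then have "(1, snd y) \<in> I \<and> (2, snd y) \<in> I" using step(2) f by (metis prod.collapse)
      then show ?thesis by blast
    qed
  qed
  from this[OF c] show ?thesis by simp
qed

lemma row_interval:
  assumes I: "I \<in> grid_intervals n" and ne: "{j. (r,j) \<in> I} \<noteq> {}"
  shows "{j. (r,j) \<in> I} = {Min {j. (r,j) \<in> I}..Max {j. (r,j) \<in> I}}"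
    "1 \<le> Min {j. (r,j) \<in> I}" "Max {j. (r,j) \<in> I} \<le> n" "r = 1 \<or> r = 2"
    "Min {j. (r,j) \<in> I} \<le> Max {j. (r,j) \<in> I}"
proof -
  let ?R = "{j. (r,j) \<in> I}"
  have sub: "?R \<subseteq> {1..n}" using interval_basic(2)[OF I] by (auto simp: grid_V_def)
  have fin: "finite ?R" using sub finite_subset by blast
  have mi: "Min ?R \<in> ?R" "Max ?R \<in> ?R" using fin ne Min_in Max_in by blast+
  then show "1 \<le> Min ?R" "Max ?R \<le> n" using sub by auto
  show "Min ?R \<le> Max ?R" by (rule Min_le[OF fin mi(2)])
  obtain j where "(r,j) \<in> I" using ne by auto
  then show r: "r = 1 \<or> r = 2" using interval_basic(2)[OF I] by (auto simp: grid_V_def)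
  show "?R = {Min ?R..Max ?R}"
  proof
    show "?R \<subseteq> {Min ?R..Max ?R}" using fin by auto
  next
    show "{Min ?R..Max ?R} \<subseteq> ?R"
    proof
      fix t assume t: "t \<in> {Min ?R..Max ?R}"
      have "(r,t) \<in> grid_V n" using t r mi sub by (auto simp: grid_V_def)
      then have "(r,t) \<in> I" using interval_conv[OF I, of "(r, Min ?R)" "(r, Max ?R)" "(r,t)"] mi t by auto
      then show "t \<in> ?R" by simp
    qed
  qed
qed




lemma interval_shape:
  assumes I: "I \<in> grid_intervals n"
  shows "(\<exists>r a b. (r = 1 \<or> r = 2) \<and> 1 \<le> a \<and> a \<le> b \<and> b \<le> n \<and> I = {(r,j) | j. a \<le> j \<and> j \<le> b}) \<or>
    (\<exists>a1 b1 a2 b2. 1 \<le> a2 \<and> a2 \<le> a1 \<and> a1 \<le> b2 \<and> b2 \<le> b1 \<and> b1 \<le> n \<and>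
        I = {(1,j) | j. a1 \<le> j \<and> j \<le> b1} \<union> {(2,j) | j. a2 \<le> j \<and> j \<le> b2})"
proof -
  define R1 where "R1 = {j. (1::nat,j) \<in> I}"
  define R2 where "R2 = {j. (2::nat,j) \<in> I}"
  have dec: "I = {(1,j) | j. j \<in> R1} \<union> {(2,j) | j. j \<in> R2}"
  proof
    show "I \<subseteq> {(1,j) | j. j \<in> R1} \<union> {(2,j) | j. j \<in> R2}"
    proof
      fix x assume x: "x \<in> I"
      then have "fst x = 1 \<or> fst x = 2" using interval_basic(2)[OF I] by (auto simp: grid_V_def)
      then show "x \<in> {(1,j) | j. j \<in> R1} \<union> {(2,j) | j. j \<in> R2}"
        using x by (cases x) (auto simp: R1_def R2_def)
    qed
  qed (auto simp: R1_def R2_def)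
  show ?thesis
  proof (cases "R1 = {}")
    case True
    then have ne: "R2 \<noteq> {}" using dec interval_basic(1)[OF I] by auto
    note r = row_interval[OF I ne[unfolded R2_def], folded R2_def]
    have e: "I = {(2,j) | j. j \<in> R2}" using dec True by simp
    have mem: "j \<in> R2 \<longleftrightarrow> Min R2 \<le> j \<and> j \<le> Max R2" for j using r(1) atLeastAtMost_iff by blast
    have "I = {(2,j) | j. Min R2 \<le> j \<and> j \<le> Max R2}"
      using e mem by blast
    then show ?thesis using r by blast
  next
    case F1: False
    show ?thesis
    proof (cases "R2 = {}")
      case True
      note r = row_interval[OF I F1[unfolded R1_def], folded R1_def]
      have e: "I = {(1,j) | j. j \<in> R1}" using dec True by simp
      have mem: "j \<in> R1 \<longleftrightarrow> Min R1 \<le> j \<and> j \<le> Max R1" for j using r(1) atLeastAtMost_iff by blast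
      have "I = {(1,j) | j. Min R1 \<le> j \<and> j \<le> Max R1}"
        using e mem by blast
      then show ?thesis using r by blast
    next
      case F2: False
      note r1 = row_interval[OF I F1[unfolded R1_def], folded R1_def]
      note r2 = row_interval[OF I F2[unfolded R2_def], folded R2_def]
      obtain j where "(1,j) \<in> I" using F1 R1_def by auto
      moreover obtain j' where "(2,j') \<in> I" using F2 R2_def by auto
      ultimately obtain t where t: "(1,t) \<in> I" "(2,t) \<in> I" using interval_conn[OF I] by blast
      have t1: "t \<in> {Min R1..Max R1}" using t r1(1) unfolding R1_def by blast
      have t2: "t \<in> {Min R2..Max R2}" using t r2(1) unfolding R2_def by blast
      have m: "(1, Min R1) \<in> I" "(2, Max R2) \<in> I" using r1(1,5) r2(1,5) unfolding R1_def R2_def by auto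
      have ab: "Min R1 \<le> Max R2" using t1 t2 by auto
      have "(1, Max R2) \<in> grid_V n" "(2, Min R1) \<in> grid_V n" using r1 r2 ab by (auto simp: grid_V_def)
      then have "(1, Max R2) \<in> I" "(2, Min R1) \<in> I"
        using interval_conv[OF I m(1) m(2)] ab by auto
      then have "Max R2 \<in> {Min R1..Max R1}" "Min R1 \<in> {Min R2..Max R2}"
        using r1(1) r2(1) unfolding R1_def R2_def by blast+
      then have ineq: "Min R2 \<le> Min R1" "Max R2 \<le> Max R1" by auto
      have mem1: "j \<in> R1 \<longleftrightarrow> Min R1 \<le> j \<and> j \<le> Max R1" for j using r1(1) atLeastAtMost_iff by blast
      have mem2: "j \<in> R2 \<longleftrightarrow> Min R2 \<le> j \<and> j \<le> Max R2" for j using r2(1) atLeastAtMost_iff by blast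
      have "I = {(1,j) | j. Min R1 \<le> j \<and> j \<le> Max R1} \<union> {(2,j) | j. Min R2 \<le> j \<and> j \<le> Max R2}"
        using dec mem1 mem2 by blast
      then show ?thesis using ineq ab r1 r2 by blast
    qed
  qed
qed




lemma all_lt_Suc: "(\<forall>i<Suc m. P i) \<longleftrightarrow> P 0 \<and> (\<forall>i<m. P (Suc i))"
  by (metis less_Suc_eq_0_disj Suc_less_eq zero_less_Suc)

lemma lt1: "(i::nat) < 1 \<longleftrightarrow> i = 0" by auto
lemma lt2: "(i::nat) < 2 \<longleftrightarrow> i = 0 \<or> i = 1" by auto
lemma lt3: "(i::nat) < 3 \<longleftrightarrow> i = 0 \<or> i = 1 \<or> i = 2" by auto
lemma lt4: "(i::nat) < 4 \<longleftrightarrow> i = 0 \<or> i = 1 \<or> i = 2 \<or> i = 3" by auto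

lemma from_list:
  fixes xs :: "(nat \<times> nat) list"
  assumes q: "(k, arrQ) \<in> five_quivers" and S: "set xs = ss_vertices n I" and l: "length xs = k"
    and dist: "distinct xs" and inV: "set xs \<subseteq> grid_V n"
    and irr: "\<And>a. \<not> arrQ a a" and nocomp: "\<And>a b c. arrQ a b \<Longrightarrow> arrQ b c \<Longrightarrow> False"
    and inQ: "\<And>a b. arrQ a b \<Longrightarrow> a < length xs \<and> b < length xs"
    and cond: "\<forall>i<length xs. \<forall>j<length xs.
       (fst (xs!i) \<le> fst (xs!j) \<and> snd (xs!i) \<le> snd (xs!j)) \<longleftrightarrow> (i = j \<or> arrQ i j)"
  shows "\<exists>(k, arrQ) \<in> five_quivers. \<exists>F0
           (Phi :: nat \<times> nat \<Rightarrow> nat \<times> nat \<Rightarrow> ((nat \<times> nat) list \<Rightarrow> 'k::field) \<Rightarrow> (nat list \<Rightarrow> 'k)).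
           lin_cat_iso (grid_V n) (grid_arr n) (ss_vertices n I) {..<k} arrQ F0 Phi"
proof -
  have "\<exists>F0 (Phi :: nat \<times> nat \<Rightarrow> nat \<times> nat \<Rightarrow> ((nat \<times> nat) list \<Rightarrow> 'k::field) \<Rightarrow> (nat list \<Rightarrow> 'k)).
     lin_cat_iso (grid_V n) (grid_arr n) (set xs) {..<length xs} arrQ F0 Phi"
    by (rule iso_list[OF dist inV irr nocomp inQ cond])
  then have "\<exists>F0 (Phi :: nat \<times> nat \<Rightarrow> nat \<times> nat \<Rightarrow> ((nat \<times> nat) list \<Rightarrow> 'k::field) \<Rightarrow> (nat list \<Rightarrow> 'k)).
     lin_cat_iso (grid_V n) (grid_arr n) (ss_vertices n I) {..<k} arrQ F0 Phi"
    unfolding S l .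
  then show ?thesis using q by (intro bexI[of _ "(k, arrQ)"]) simp_all
qed

theorem mainTheorem19:
  fixes n :: nat and I :: "(nat \<times> nat) set"
  assumes "I \<in> grid_intervals n"
  shows "\<exists>(k, arrQ) \<in> five_quivers. \<exists>F0
           (Phi :: nat \<times> nat \<Rightarrow> nat \<times> nat \<Rightarrow> ((nat \<times> nat) list \<Rightarrow> 'k::field) \<Rightarrow> (nat list \<Rightarrow> 'k)).
           lin_cat_iso (grid_V n) (grid_arr n) (ss_vertices n I) {..<k} arrQ F0 Phi"
proof -
  have q1: "(1, \<lambda>a b. False) \<in> five_quivers" by (simp add: five_quivers_def)
  have q2: "(2, \<lambda>a b. a = 0 \<and> b = 1) \<in> five_quivers" by (simp add: five_quivers_def)
  have q3: "(3, \<lambda>a b. (a = 0 \<and> b = 1) \<or> (a = 2 \<and> b = 1)) \<in> five_quivers" by (simp add: five_quivers_def)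
  have q4: "(3, \<lambda>a b. (a = 1 \<and> b = 0) \<or> (a = 1 \<and> b = 2)) \<in> five_quivers" by (simp add: five_quivers_def)
  have q5: "(4, \<lambda>a b. (a = 0 \<and> b = 1) \<or> (a = 2 \<and> b = 1) \<or> (a = 2 \<and> b = 3)) \<in> five_quivers"
    by (simp add: five_quivers_def)
  from interval_shape[OF assms] show ?thesis
  proof
    assume "\<exists>r a b. (r = 1 \<or> r = 2) \<and> 1 \<le> a \<and> a \<le> b \<and> b \<le> n \<and> I = {(r,j) | j. a \<le> j \<and> j \<le> b}"
    then obtain r a b :: nat where r: "r = 1 \<or> r = 2" and ab: "1 \<le> a" "a \<le> b" "b \<le> n"
      and I: "I = {(r,j) | j. a \<le> j \<and> j \<le> b}" by blast
    have S: "ss_vertices n I = {(r,a),(r,b)}" by (rule ss_one_row[OF r ab I])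
    show ?thesis
    proof (cases "a = b")
      case True
      show ?thesis
        apply (rule from_list[OF q1, of "[(r,a)]"])
        subgoal using S True r ab by simp
        subgoal by simp
        subgoal using S True r ab by auto
        subgoal using r ab unfolding grid_V_def by auto
        subgoal by auto
        subgoal by auto
        subgoal by auto
        subgoal using S True r ab by (simp add: all_lt_Suc)
        done
    next
      case False
      show ?thesis
        apply (rule from_list[OF q2, of "[(r,a),(r,b)]"])
        subgoal using S False r ab by simp
        subgoal by simp
        subgoal using S False r ab by auto
        subgoal using r ab unfolding grid_V_def by auto
        subgoal by auto
        subgoal by auto
        subgoal by auto
        subgoal using S False r ab by (simp add: all_lt_Suc)
        done
    qed
  next
    assume "\<exists>a1 b1 a2 b2. 1 \<le> a2 \<and> a2 \<le> a1 \<and> a1 \<le> b2 \<and> b2 \<le> b1 \<and> b1 \<le> n \<and>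
        I = {(1,j) | j. a1 \<le> j \<and> j \<le> b1} \<union> {(2,j) | j. a2 \<le> j \<and> j \<le> b2}"
    then obtain a1 b1 a2 b2 where h: "1 \<le> a2" "a2 \<le> a1" "a1 \<le> b2" "b2 \<le> b1" "b1 \<le> n"
      and I: "I = {(1,j) | j. a1 \<le> j \<and> j \<le> b1} \<union> {(2,j) | j. a2 \<le> j \<and> j \<le> b2}" by blast
    note S = ss_two_rows[OF h I]
    show ?thesis
    proof (cases "a2 < a1")
      case A: True
      show ?thesis
      proof (cases "b2 < b1")
        case B: True
        show ?thesis
          apply (rule from_list[OF q5, of "[(2,a2),(2,b2),(1,a1),(1,b1)]"])
          subgoal using S A B h by auto
          subgoal by simp
          subgoal using S A B h by auto
          subgoal using h unfolding grid_V_def by auto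
          subgoal by auto
          subgoal by auto
          subgoal by auto
          subgoal using S A B h by (simp add: all_lt_Suc)
          done
      next
        case B: False
        show ?thesis
          apply (rule from_list[OF q3, of "[(1,a1),(2,b2),(2,a2)]"])
          subgoal using S A B h by auto
          subgoal by simp
          subgoal using S A B h by auto
          subgoal using h unfolding grid_V_def by auto
          subgoal by auto
          subgoal by auto
          subgoal by auto
          subgoal using S A B h by (simp add: all_lt_Suc)
          done
      qed
    next
      case A: False
      show ?thesis
      proof (cases "b2 < b1")
        case B: True
        show ?thesis
          apply (rule from_list[OF q4, of "[(2,b2),(1,a1),(1,b1)]"])
          subgoal using S A B h by auto
          subgoal by simp
          subgoal using S A B h by auto
          subgoal using h unfolding grid_V_def by auto
          subgoal by auto
          subgoal by auto
          subgoal by auto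
          subgoal using S A B h by (simp add: all_lt_Suc)
          done
      next
        case B: False
        show ?thesis
          apply (rule from_list[OF q2, of "[(1,a1),(2,b2)]"])
          subgoal using S A B h by auto
          subgoal by simp
          subgoal using S A B h by auto
          subgoal using h unfolding grid_V_def by auto
          subgoal by auto
          subgoal by auto
          subgoal by auto
          subgoal using S A B h by (simp add: all_lt_Suc)
          done
      qed
    qed
  qed
qed


end
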